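(* Assume the setting below, fix $t>0$, $N\ge1$ and $(i,j)\in\mathcal I_N$. Every weak limit point (as $L\to\infty$ along multiples of $N$) of the sequence of probability measures $\{p_{L,t,(i,j)}\}_L$ on $\Omega$ is invariant under all translations of $\mathcal T$.
   Context: Lattices: $\mathcal T$ is the triangular lattice on $\mathbb Z^2$ ($u\sim u\pm\hat e_i$, $\hat e_1=(1,0)$, $\hat e_2=(0,1)$, $\hat e_3=(-1,-1)$; $\hat e_3$ vertical), $\mathcal H$ its dual honeycomb lattice; $b_i(u)$ is the edge of $\mathcal H$ crossed by the $\mathcal T$-edge from $u$ to $u+\hat e_i$ (type $i$; type-3 dimers are "particles"); $\mathcal H_L,\mathcal T_L$ are quotients by $L\mathbb Z^2$. $\mathbb T$ is the open triangle with vertices $(0,0),(1,0),(0,1)$. $\Omega_{\bar\rho^{(L)}}$ ($\bar\rho^{(L)}\in\mathbb T$, $L\bar\rho^{(L)}_i\in\mathbb N$) is the set of perfect matchings of $\mathcal H_L$ with $L^2\bar\rho^{(L)}_i$ dimers of type $i=1,2$. Dynamics: a particle at $b_3(v)$ moved by $\pm n\hat e_3$ goes to $b_3(v\pm n\hat e_3)$ (other particles fixed); $I^\pm(p)$ is the largest $m\ge0$ such that moving particle $p$ by $\pm n\hat e_3$ gives a configuration of $\Omega_{\bar\rho^{(L)}}$ for all $1\le n\le m$; the Markov chain $\eta(t)$ on $\Omega_{\bar\rho^{(L)}}$ moves $p$ by $\pm n\hat e_3$, $1\le n\le I^\pm(p)$, at rate $L^2/(2n)$, started from $\eta_0\in\Omega_{\bar\rho^{(L)}}$;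 $\mathbb E$ its expectation. Standing assumption: $\bar\rho^{(L)}\to\bar\rho\in\mathbb T$; there is a compact convex $\mathcal A\subset\mathbb T$ and a periodic $C^2$ $\psi_0$ on $[0,1]^2$ with $\psi_0(0,0)=0$, $\nabla\psi_0+\bar\rho\in\mathcal A$, $\frac1LH_{\eta_0}(\lfloor uL\rfloor)\to\psi_0(u)$, where $H_\eta(0,0)=0$, $H_\eta(u+\hat e_i)-H_\eta(u)=-\bar\rho^{(L)}_i+\mathbf 1_{b_i(u)\in\eta}$. $\Omega$ is the set of dimer coverings of $\mathcal H$ with the product topology; configurations of $\mathcal H_L$ are identified with their $L$-periodic lifts; $\eta_{-u}$ is the translate of $\eta$ by $-u$. For $N\ge1$, $L$ a multiple of $N$: $\mathcal I_N=\{(i,j):1\le i\le N, j=(j_1,j_2),1\le j_a\le N\}$, $B_j=\{u\in\mathcal T_L:u_a\in\{L(j_a-1)/N,\dots,Lj_a/N-1\},a=1,2\}$, $I_i=[t(i-1)/N,ti/N)$, and $p_{L,t,(i,j)}(f)=\frac{1}{(L/N)^2}\sum_{u\in B_j}\frac{1}{t/N}\int_{I_i}\mathbb E\,f(\eta_{-u}(s))\,ds$. *)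

theory Defs
  imports "HOL-Analysis.Analysis" "HOL-Probability.Probability"
begin

text \<open>Edge types of the honeycomb lattice H: the edge b_i(u) is crossed by the
  triangular-lattice edge from u to u + e_i.  A (possibly infinite) dimer configuration
  is a set of H-edges, encoded as a predicate on (u, i).\<close>

datatype etype = E1 | E2 | E3

type_synonym site = "int \<times> int"
type_synonym config = "site \<times> etype \<Rightarrow> bool"

fun evec :: "etype \<Rightarrow> site" where
  "evec E1 = (1, 0)"
| "evec E2 = (0, 1)"
| "evec E3 = (-1, -1)"

definition sadd :: "site \<Rightarrow> site \<Rightarrow> site" where
  "sadd u v = (fst u + fst v, snd u + snd v)"

definition exactly_one :: "bool \<Rightarrow> bool \<Rightarrow> bool \<Rightarrow> bool" where
  "exactly_one a b c \<longleftrightarrow> (a \<or> b \<or> c) \<and> \<not>(a \<and> b) \<and> \<not>(a \<and> c) \<and> \<not>(b \<and> c)"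

text \<open>The vertices of H are the triangles of T: for each u the triangles
  {u, u+e1, u+(1,1)} (edges b_1(u), b_2(u+e1), b_3(u+(1,1))) and
  {u, u+e2, u+(1,1)} (edges b_2(u), b_1(u+e2), b_3(u+(1,1))).\<close>

definition is_dimer_cov :: "config \<Rightarrow> bool" where
  "is_dimer_cov \<eta> \<longleftrightarrow> (\<forall>u.
     exactly_one (\<eta> (u, E1)) (\<eta> (sadd u (1,0), E2)) (\<eta> (sadd u (1,1), E3)) \<and>
     exactly_one (\<eta> (u, E2)) (\<eta> (sadd u (0,1), E1)) (\<eta> (sadd u (1,1), E3)))"

definition Omega :: "config set" where
  "Omega = {\<eta>. is_dimer_cov \<eta>}"

text \<open>Translate of eta by -u: eta_{-u}.\<close>
definition shift :: "site \<Rightarrow> config \<Rightarrow> config" where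
  "shift u \<eta> = (\<lambda>(w, i). \<eta> (sadd w u, i))"

definition periodic :: "nat \<Rightarrow> config \<Rightarrow> bool" where
  "periodic L \<eta> \<longleftrightarrow> (\<forall>w i. \<eta> (sadd w (int L, 0), i) = \<eta> (w, i) \<and> \<eta> (sadd w (0, int L), i) = \<eta> (w, i))"

text \<open>Fundamental domain = set of representatives of T_L.\<close>
definition box :: "nat \<Rightarrow> site set" where
  "box L = {0..<int L} \<times> {0..<int L}"

text \<open>Omega_{rho^(L)}: perfect matchings of H_L (as L-periodic lifts) with
  L^2 rho_i dimers of type i, i = 1,2.\<close>
definition Omega_L :: "nat \<Rightarrow> real \<times> real \<Rightarrow> config set" where
  "Omega_L L \<rho> = {\<eta> \<in> Omega. periodic L \<eta> \<and>
      real (card {u \<in> box L. \<eta> (u, E1)}) = (real L)^2 * fst \<rho> \<and>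
      real (card {u \<in> box L. \<eta> (u, E2)}) = (real L)^2 * snd \<rho>}"

text \<open>Particles (type-3 dimers) of a periodic configuration, as positions in T_L.\<close>
definition particles :: "nat \<Rightarrow> config \<Rightarrow> site set" where
  "particles L \<eta> = {u \<in> box L. \<eta> (u, E3)}"

definition tmod :: "nat \<Rightarrow> site \<Rightarrow> site" where
  "tmod L u = (fst u mod int L, snd u mod int L)"

definition moved :: "nat \<Rightarrow> site set \<Rightarrow> site \<Rightarrow> int \<Rightarrow> site set" where
  "moved L P p n = insert (tmod L (sadd p (-n, -n))) (P - {p})"

definition valid_move :: "nat \<Rightarrow> real \<times> real \<Rightarrow> config \<Rightarrow> site \<Rightarrow> int \<Rightarrow> bool" where
  "valid_move L \<rho> \<eta> p n \<longleftrightarrow>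
     (\<exists>\<eta>' \<in> Omega_L L \<rho>. particles L \<eta>' = moved L (particles L \<eta>) p n)"

text \<open>n = +m or -m with 1 \<le> m \<le> I^{+-}(p): all intermediate moves are valid.\<close>
definition allowed_move :: "nat \<Rightarrow> real \<times> real \<Rightarrow> config \<Rightarrow> site \<Rightarrow> int \<Rightarrow> bool" where
  "allowed_move L \<rho> \<eta> p n \<longleftrightarrow> n \<noteq> 0 \<and> (\<forall>k \<in> {1..\<bar>n\<bar>}. valid_move L \<rho> \<eta> p (sgn n * k))"

definition rate :: "nat \<Rightarrow> real \<times> real \<Rightarrow> config \<Rightarrow> config \<Rightarrow> real" where
  "rate L \<rho> \<eta> \<eta>' = (\<Sum>p \<in> particles L \<eta>.
      \<Sum>n \<in> {n. allowed_move L \<rho> \<eta> p n \<and> particles L \<eta>' = moved L (particles L \<eta>) p n}.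
        (real L)^2 / (2 * real_of_int \<bar>n\<bar>))"

definition generator :: "nat \<Rightarrow> real \<times> real \<Rightarrow> config \<Rightarrow> config \<Rightarrow> real" where
  "generator L \<rho> \<eta> \<eta>' =
     (if \<eta>' = \<eta> then - (\<Sum>\<zeta> \<in> Omega_L L \<rho> - {\<eta>}. rate L \<rho> \<eta> \<zeta>) else rate L \<rho> \<eta> \<eta>')"

fun gen_pow :: "nat \<Rightarrow> real \<times> real \<Rightarrow> nat \<Rightarrow> config \<Rightarrow> config \<Rightarrow> real" where
  "gen_pow L \<rho> 0 \<eta> \<eta>' = (if \<eta> = \<eta>' then 1 else 0)"
| "gen_pow L \<rho> (Suc k) \<eta> \<eta>' = (\<Sum>\<zeta> \<in> Omega_L L \<rho>. generator L \<rho> \<eta> \<zeta> * gen_pow L \<rho> k \<zeta> \<eta>')"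

definition trans_prob :: "nat \<Rightarrow> real \<times> real \<Rightarrow> real \<Rightarrow> config \<Rightarrow> config \<Rightarrow> real" where
  "trans_prob L \<rho> s \<eta> \<eta>' = (\<Sum>k. s ^ k / fact k * gen_pow L \<rho> k \<eta> \<eta>')"

definition expect :: "nat \<Rightarrow> real \<times> real \<Rightarrow> config \<Rightarrow> real \<Rightarrow> (config \<Rightarrow> real) \<Rightarrow> real" where
  "expect L \<rho> \<eta>0 s f = (\<Sum>\<eta>' \<in> Omega_L L \<rho>. trans_prob L \<rho> s \<eta>0 \<eta>' * f \<eta>')"

definition Bblock :: "nat \<Rightarrow> nat \<Rightarrow> nat \<times> nat \<Rightarrow> site set" where
  "Bblock N L j = {int (L div N) * (int (fst j) - 1) .. int (L div N) * int (fst j) - 1} \<times>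
                  {int (L div N) * (int (snd j) - 1) .. int (L div N) * int (snd j) - 1}"

definition index_set :: "nat \<Rightarrow> (nat \<times> (nat \<times> nat)) set" where
  "index_set N = {(i, j). i \<in> {1..N} \<and> fst j \<in> {1..N} \<and> snd j \<in> {1..N}}"

text \<open>p_{L,t,(i,j)} as a functional on observables f.\<close>
definition p_func :: "nat \<Rightarrow> nat \<Rightarrow> real \<Rightarrow> nat \<Rightarrow> nat \<times> nat \<Rightarrow> real \<times> real \<Rightarrow> config
    \<Rightarrow> (config \<Rightarrow> real) \<Rightarrow> real" where
  "p_func N L t i j \<rho> \<eta>0 f =
     1 / (real L / real N)^2 * (\<Sum>u \<in> Bblock N L j.
        1 / (t / real N) * (LINT s:{t * (real i - 1) / real N ..< t * real i / real N}|lborel.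
           expect L \<rho> \<eta>0 s (\<lambda>\<eta>. f (shift u \<eta>))))"

definition weak_limit_point :: "nat \<Rightarrow> real \<Rightarrow> nat \<Rightarrow> nat \<times> nat \<Rightarrow> (nat \<Rightarrow> real \<times> real)
    \<Rightarrow> (nat \<Rightarrow> config) \<Rightarrow> config measure \<Rightarrow> bool" where
  "weak_limit_point N t i j \<rho>L \<eta>0L \<mu> \<longleftrightarrow>
     prob_space \<mu> \<and> sets \<mu> = sets borel \<and> emeasure \<mu> Omega = 1 \<and>
     (\<exists>Ls :: nat \<Rightarrow> nat. strict_mono Ls \<and> (\<forall>k. N dvd Ls k) \<and>
        (\<forall>f :: config \<Rightarrow> real. continuous_on Omega f \<and> bounded (f ` Omega) \<longrightarrow>
           (\<lambda>k. p_func N (Ls k) t i j (\<rho>L (Ls k)) (\<eta>0L (Ls k)) f)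
             \<longlonglongrightarrow> (\<integral>x. indicator Omega x * f x \<partial>\<mu>)))"

definition translation_invariant :: "config measure \<Rightarrow> bool" where
  "translation_invariant \<mu> \<longleftrightarrow>
     (\<forall>u A. A \<in> sets \<mu> \<longrightarrow> emeasure \<mu> (shift u -` A \<inter> space \<mu>) = emeasure \<mu> A)"

definition Tri :: "(real \<times> real) set" where
  "Tri = {r. fst r > 0 \<and> snd r > 0 \<and> fst r + snd r < 1}"

definition dens :: "real \<times> real \<Rightarrow> etype \<Rightarrow> real" where
  "dens \<rho> i = (case i of E1 \<Rightarrow> fst \<rho> | E2 \<Rightarrow> snd \<rho> | E3 \<Rightarrow> 1 - fst \<rho> - snd \<rho>)"

definition is_height :: "real \<times> real \<Rightarrow> config \<Rightarrow> (site \<Rightarrow> real) \<Rightarrow> bool" where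
  "is_height \<rho> \<eta> H \<longleftrightarrow> H (0, 0) = 0 \<and>
     (\<forall>u i. H (sadd u (evec i)) - H u = - dens \<rho> i + (if \<eta> (u, i) then 1 else 0))"

definition height :: "real \<times> real \<Rightarrow> config \<Rightarrow> site \<Rightarrow> real" where
  "height \<rho> \<eta> = (THE H. is_height \<rho> \<eta> H)"

definition C2 :: "(real \<times> real \<Rightarrow> real) \<Rightarrow> bool" where
  "C2 f \<longleftrightarrow> (\<exists>Df :: real \<times> real \<Rightarrow> (real \<times> real) \<Rightarrow>\<^sub>L real.
                \<exists>D2f :: real \<times> real \<Rightarrow> (real \<times> real) \<Rightarrow>\<^sub>L ((real \<times> real) \<Rightarrow>\<^sub>L real).
     (\<forall>x. (f has_derivative blinfun_apply (Df x)) (at x)) \<and>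
     (\<forall>x. (Df has_derivative blinfun_apply (D2f x)) (at x)) \<and>
     continuous_on UNIV D2f)"

definition grad :: "(real \<times> real \<Rightarrow> real) \<Rightarrow> real \<times> real \<Rightarrow> real \<times> real" where
  "grad f x = (frechet_derivative f (at x) (1, 0), frechet_derivative f (at x) (0, 1))"

end

theory Submission
  imports Defs
begin

instance etype :: countable by countable_datatype
instance bool :: second_countable_topology
proof
  show "\<exists>B::bool set set. countable B \<and> open = generate_topology B"
    by (intro exI[of _ "range (\<lambda>a. {..<a}) \<union> range (\<lambda>a. {a<..})"]) (auto simp: open_bool_def)
qed

definition cyl :: "(site \<times> etype \<Rightarrow> site \<times> etype) \<Rightarrow> (site \<times> etype) set \<Rightarrow> (site \<times> etype \<Rightarrow> bool set) \<Rightarrow> config set" where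
  "cyl \<phi> J F = {x. \<forall>j\<in>J. x (\<phi> j) \<in> F j}"

lemma cyl_eq: "cyl \<phi> J F = (\<Inter>j\<in>J. (\<lambda>x. x (\<phi> j)) -` F j)"
  by (auto simp: cyl_def)

lemma cyl_open: "finite J \<Longrightarrow> open (cyl \<phi> J F)"
  unfolding cyl_eq by (intro open_INT ballI open_vimage discrete_topology_class.open_discrete continuous_on_product_coordinates)

lemma cyl_closed: "closed (cyl \<phi> J F)"
  unfolding cyl_eq closed_def[of "_ -` _"]
  by (intro closed_INT ballI closed_vimage continuous_on_product_coordinates) (simp add: closed_def discrete_topology_class.open_discrete)

lemma cont_ind_cyl:
  assumes "finite J"
  shows "continuous_on UNIV (indicator (cyl \<phi> J F) :: config \<Rightarrow> real)"
proof -
  let ?C = "cyl \<phi> J F"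
  have oC: "open ?C" by (rule cyl_open[OF assms])
  have ocC: "open (- ?C)" using cyl_closed by (simp add: closed_def)
  have "open ((indicator ?C :: config \<Rightarrow> real) -` B)" for B :: "real set"
  proof -
    have "(indicator ?C :: config \<Rightarrow> real) -` B = (if (1::real) \<in> B then ?C else {}) \<union> (if (0::real) \<in> B then - ?C else {})"
      by (auto simp: indicator_def of_bool_def split: if_splits)
    then show ?thesis using oC ocC by auto
  qed
  then show ?thesis by (simp add: continuous_on_open_vimage[OF open_UNIV])
qed

lemma shift_cyl: "shift v -` cyl \<phi> J F = cyl (\<lambda>j. (sadd (fst (\<phi> j)) v, snd (\<phi> j))) J F"
  by (auto simp: cyl_def shift_def case_prod_unfold)

lemma prod_emb_cyl: "prod_emb UNIV (\<lambda>_. borel) J (Pi\<^sub>E J A) = cyl id J A"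
  by (auto simp: prod_emb_def cyl_def PiE_def extensional_def Pi_def)

lemma sets_config: "sets (Pi\<^sub>M UNIV (\<lambda>_. borel)) = sets (borel :: config measure)"
  by (rule sets_PiM_equal_borel)

lemma shift_measurable:
  assumes "sets \<mu> = sets (borel :: config measure)"
  shows "shift u \<in> measurable \<mu> \<mu>"
proof -
  have e: "shift u = (\<lambda>\<omega> i. (\<lambda>\<omega>. \<omega> (sadd (fst i) u, snd i)) \<omega>)"
    by (auto simp: shift_def case_prod_unfold fun_eq_iff)
  have "shift u \<in> measurable (Pi\<^sub>M UNIV (\<lambda>_. borel)) (Pi\<^sub>M UNIV (\<lambda>_. (borel :: bool measure)))"
    unfolding e
    by (rule measurable_PiM_single') (auto intro: measurable_component_singleton)
  moreover have "sets \<mu> = sets (Pi\<^sub>M UNIV (\<lambda>_. (borel :: bool measure)))" using assms sets_config by simp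
  ultimately show ?thesis using measurable_cong_sets by blast
qed

lemma invariance_from_cyl:
  assumes sets: "sets \<mu> = sets (borel :: config measure)" and P: "prob_space \<mu>"
    and H: "\<And>J F v. finite J \<Longrightarrow> measure \<mu> (shift v -` cyl id J F) = measure \<mu> (cyl id J F)"
  shows "translation_invariant \<mu>"
  unfolding translation_invariant_def
proof (intro allI impI)
  fix u A assume A: "A \<in> sets \<mu>"
  interpret prob_space \<mu> by fact
  have sp: "space \<mu> = UNIV" using sets_eq_imp_space_eq[OF sets] by simp
  have meas: "shift u \<in> measurable \<mu> \<mu>" by (rule shift_measurable[OF sets])
  let ?D = "distr \<mu> \<mu> (shift u)"
  have "\<mu> = ?D"
  proof (rule measure_eqI_PiM_infinite[where I = UNIV and M = "\<lambda>_. borel"])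
    show "sets \<mu> = sets (Pi\<^sub>M UNIV (\<lambda>_. borel))" using sets sets_config by simp
    show "sets ?D = sets (Pi\<^sub>M UNIV (\<lambda>_. borel))" using sets sets_config by simp
    show "finite_measure \<mu>" by unfold_locales
    fix B :: "site \<times> etype \<Rightarrow> bool set" and J :: "(site \<times> etype) set" assume J: "finite J"
    have Cs: "cyl id J B \<in> sets \<mu>" using sets cyl_open[OF J] by simp
    have "emeasure ?D (cyl id J B) = emeasure \<mu> (shift u -` cyl id J B)"
      using emeasure_distr[OF meas Cs] sp by simp
    also have "\<dots> = measure \<mu> (shift u -` cyl id J B)" by (simp add: emeasure_eq_measure)
    also have "\<dots> = measure \<mu> (cyl id J B)" using H[OF J] by simp
    also have "\<dots> = emeasure \<mu> (cyl id J B)" by (simp add: emeasure_eq_measure)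
    finally show "emeasure \<mu> (prod_emb UNIV (\<lambda>_. borel) J (Pi\<^sub>E J B)) = emeasure ?D (prod_emb UNIV (\<lambda>_. borel) J (Pi\<^sub>E J B))"
      unfolding prod_emb_cyl by simp
  qed
  then have "emeasure \<mu> A = emeasure ?D A" by simp
  also have "\<dots> = emeasure \<mu> (shift u -` A \<inter> space \<mu>)" using emeasure_distr[OF meas A] by simp
  finally show "emeasure \<mu> (shift u -` A \<inter> space \<mu>) = emeasure \<mu> A" by simp
qed

lemma integral_Omega_ind:
  assumes sets: "sets \<mu> = sets (borel :: config measure)" and P: "prob_space \<mu>"
    and O: "emeasure \<mu> Omega = 1" and C: "C \<in> sets \<mu>"
  shows "(\<integral>x. indicator Omega x * indicator C x \<partial>\<mu>) = (measure \<mu> C :: real)"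
proof -
  interpret prob_space \<mu> by fact
  have sp: "space \<mu> = UNIV" using sets_eq_imp_space_eq[OF sets] by simp
  have Os: "Omega \<in> sets \<mu>" using O emeasure_notin_sets by fastforce
  have "emeasure \<mu> (space \<mu> - Omega) = emeasure \<mu> (space \<mu>) - emeasure \<mu> Omega"
    by (rule emeasure_compl[OF Os]) (simp add: O)
  then have "emeasure \<mu> (space \<mu> - Omega) = 0" using O by (simp add: emeasure_space_1)
  then have N: "space \<mu> - Omega \<in> null_sets \<mu>" using Os by (auto intro: null_setsI)
  have "(\<integral>x. indicator Omega x * indicator C x \<partial>\<mu>) = (\<integral>x. indicator (C - (space \<mu> - Omega)) x \<partial>\<mu> :: real)"
    by (rule Bochner_Integration.integral_cong) (auto simp: indicator_def sp)
  also have "\<dots> = measure \<mu> (C - (space \<mu> - Omega))" using sp by simp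
  also have "\<dots> = measure \<mu> C" by (rule measure_Diff_null_set[OF C N])
  finally show ?thesis .
qed

fun gp :: "'a set \<Rightarrow> ('a \<Rightarrow> 'a \<Rightarrow> real) \<Rightarrow> nat \<Rightarrow> 'a \<Rightarrow> 'a \<Rightarrow> real" where
  "gp S Q 0 x y = (if x = y then 1 else 0)"
| "gp S Q (Suc k) x y = (\<Sum>z\<in>S. Q x z * gp S Q k z y)"

lemma gp_bound:
  assumes "finite S" "x \<in> S"
  shows "\<bar>gp S Q k x y\<bar> \<le> (\<Sum>a\<in>S. \<Sum>b\<in>S. \<bar>Q a b\<bar>) ^ k"
  using assms(2)
proof (induction k arbitrary: x)
  case 0
  then show ?case by simp
next
  case (Suc k)
  let ?M = "(\<Sum>a\<in>S. \<Sum>b\<in>S. \<bar>Q a b\<bar>)"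
  have "\<bar>gp S Q (Suc k) x y\<bar> \<le> (\<Sum>z\<in>S. \<bar>Q x z\<bar> * \<bar>gp S Q k z y\<bar>)"
    by (simp add: abs_mult[symmetric] sum_abs)
  also have "\<dots> \<le> (\<Sum>z\<in>S. \<bar>Q x z\<bar> * ?M ^ k)"
    by (rule sum_mono) (auto intro: mult_left_mono Suc.IH)
  also have "\<dots> = (\<Sum>z\<in>S. \<bar>Q x z\<bar>) * ?M ^ k" by (simp add: sum_distrib_right)
  also have "\<dots> \<le> ?M * ?M ^ k"
  proof (rule mult_right_mono)
    show "(\<Sum>z\<in>S. \<bar>Q x z\<bar>) \<le> ?M"
      using member_le_sum[of x S "\<lambda>a. \<Sum>b\<in>S. \<bar>Q a b\<bar>"] Suc.prems assms(1)
      by (simp add: sum_nonneg)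
  qed (simp add: sum_nonneg)
  finally show ?case by simp
qed

lemma gp_summable:
  assumes "finite S" "x \<in> S"
  shows "summable (\<lambda>k. norm (s ^ k / fact k * gp S Q k x y))"
proof -
  let ?M = "(\<Sum>a\<in>S. \<Sum>b\<in>S. \<bar>Q a b\<bar>)"
  have "summable (\<lambda>k. inverse (fact k) * (\<bar>s\<bar> * ?M) ^ k)" by (rule summable_exp)
  then show ?thesis
  proof (rule summable_comparison_test[rotated], intro exI allI impI)
    fix k
    have "norm (norm (s ^ k / fact k * gp S Q k x y)) = \<bar>s\<bar>^k / fact k * \<bar>gp S Q k x y\<bar>"
      by (simp add: abs_mult power_abs)
    also have "\<dots> \<le> \<bar>s\<bar>^k / fact k * ?M ^ k"
      by (rule mult_left_mono[OF gp_bound[OF assms]]) simp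
    also have "\<dots> = inverse (fact k) * (\<bar>s\<bar> * ?M) ^ k"
      by (simp add: power_mult_distrib divide_inverse)
    finally show "norm (norm (s ^ k / fact k * gp S Q k x y)) \<le> inverse (fact k) * (\<bar>s\<bar> * ?M) ^ k" .
  qed
qed

lemma binom_step:
  fixes g :: "nat \<Rightarrow> real"
  shows "(\<Sum>k\<le>m. real (m choose k) * c ^ (m - k) * g (Suc k)) + c * (\<Sum>k\<le>m. real (m choose k) * c ^ (m - k) * g k)
     = (\<Sum>k\<le>Suc m. real (Suc m choose k) * c ^ (Suc m - k) * g k)"
proof -
  have "(\<Sum>k\<le>Suc m. real (Suc m choose k) * c ^ (Suc m - k) * g k)
     = c ^ Suc m * g 0 + (\<Sum>k\<le>m. real (Suc m choose Suc k) * c ^ (m - k) * g (Suc k))"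
    by (subst sum.atMost_Suc_shift) simp
  also have "\<dots> = c ^ Suc m * g 0 + (\<Sum>k\<le>m. real (m choose k) * c ^ (m - k) * g (Suc k))
      + (\<Sum>k\<le>m. real (m choose Suc k) * c ^ (m - k) * g (Suc k))"
    by (simp add: sum.distrib algebra_simps)
  also have "(\<Sum>k\<le>m. real (m choose Suc k) * c ^ (m - k) * g (Suc k))
      = (\<Sum>k\<le>Suc m. real (m choose k) * c ^ (Suc m - k) * g k) - c ^ Suc m * g 0"
    by (subst sum.atMost_Suc_shift) simp
  also have "(\<Sum>k\<le>Suc m. real (m choose k) * c ^ (Suc m - k) * g k) = (\<Sum>k\<le>m. real (m choose k) * c ^ (Suc m - k) * g k)"
    by simp
  also have "\<dots> = c * (\<Sum>k\<le>m. real (m choose k) * c ^ (m - k) * g k)"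
    by (simp add: sum_distrib_left Suc_diff_le algebra_simps)
  finally show ?thesis by simp
qed

lemma gp_binom:
  assumes "x \<in> S" and fin: "finite S"
  shows "gp S (\<lambda>a b. Q a b + (if a = b then c else 0)) m x y =
     (\<Sum>k\<le>m. real (m choose k) * c ^ (m - k) * gp S Q k x y)"
  using assms(1)
proof (induction m arbitrary: x)
  case 0
  then show ?case by simp
next
  case (Suc m)
  let ?P = "\<lambda>a b. Q a b + (if a = b then c else 0)"
  have "gp S ?P (Suc m) x y = (\<Sum>z\<in>S. Q x z * gp S ?P m z y) + (\<Sum>z\<in>S. (if x = z then c else 0) * gp S ?P m z y)"
    by (simp add: distrib_right sum.distrib)
  also have "(\<Sum>z\<in>S. (if x = z then c else 0) * gp S ?P m z y) = c * gp S ?P m x y"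
  proof -
    have "(\<Sum>z\<in>S. (if x = z then c else 0) * gp S ?P m z y) = (\<Sum>z\<in>S. if x = z then c * gp S ?P m z y else 0)"
      by (rule sum.cong) auto
    also have "\<dots> = c * gp S ?P m x y" using Suc.prems fin by (simp add: sum.delta)
    finally show ?thesis .
  qed
  also have "(\<Sum>z\<in>S. Q x z * gp S ?P m z y) = (\<Sum>z\<in>S. Q x z * (\<Sum>k\<le>m. real (m choose k) * c ^ (m - k) * gp S Q k z y))"
    by (rule sum.cong) (auto simp: Suc.IH)
  also have "\<dots> = (\<Sum>k\<le>m. real (m choose k) * c ^ (m - k) * gp S Q (Suc k) x y)"
    by (simp add: sum_distrib_left mult.left_commute[of "Q x _"]) (rule sum.swap)
  finally show ?case using binom_step[of m c "\<lambda>k. gp S Q k x y"] Suc.prems Suc.IH by simp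
qed

lemma gp_nonneg:
  assumes "x \<in> S" "\<And>a b. a \<in> S \<Longrightarrow> b \<in> S \<Longrightarrow> P a b \<ge> 0"
  shows "gp S P m x y \<ge> 0"
  using assms(1)
  by (induction m arbitrary: x) (auto intro!: sum_nonneg mult_nonneg_nonneg assms(2))

lemma gp_rowsum:
  assumes "finite S" "x \<in> S" "\<And>a. a \<in> S \<Longrightarrow> (\<Sum>b\<in>S. Q a b) = 0"
  shows "(\<Sum>y\<in>S. gp S Q k x y) = (if k = 0 then 1 else 0)"
  using assms(2)
proof (induction k arbitrary: x)
  case 0
  then show ?case using assms(1) by simp
next
  case (Suc k)
  have "(\<Sum>y\<in>S. gp S Q (Suc k) x y) = (\<Sum>z\<in>S. Q x z * (\<Sum>y\<in>S. gp S Q k z y))"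
    by (simp add: sum_distrib_left) (rule sum.swap)
  also have "\<dots> = (\<Sum>z\<in>S. Q x z * (if k = 0 then 1 else 0))"
    by (rule sum.cong) (auto simp: Suc.IH)
  also have "\<dots> = 0" using assms(3)[OF Suc.prems] by (simp add: sum_distrib_right[symmetric])
  finally show ?case by simp
qed

definition tp :: "'a set \<Rightarrow> ('a \<Rightarrow> 'a \<Rightarrow> real) \<Rightarrow> real \<Rightarrow> 'a \<Rightarrow> 'a \<Rightarrow> real" where
  "tp S Q s x y = (\<Sum>k. s ^ k / fact k * gp S Q k x y)"

lemma tp_nonneg:
  assumes fin: "finite S" and x: "x \<in> S" and s: "s \<ge> 0"
    and Qoff: "\<And>a b. a \<in> S \<Longrightarrow> b \<in> S \<Longrightarrow> a \<noteq> b \<Longrightarrow> Q a b \<ge> 0"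
  shows "tp S Q s x y \<ge> 0"
proof -
  define c where "c = (\<Sum>a\<in>S. \<bar>Q a a\<bar>)"
  let ?P = "\<lambda>a b. Q a b + (if a = b then c else 0)"
  define A where "A k = s ^ k / fact k * gp S Q k x y" for k
  define B where "B j = (c * s) ^ j / fact j" for j
  have sA: "summable (\<lambda>k. norm (A k))" unfolding A_def by (rule gp_summable[OF fin x])
  have sB: "summable (\<lambda>k. norm (B k))"
  proof -
    have "summable (\<lambda>k. \<bar>c * s\<bar> ^ k / fact k)"
      using exp_converges[of "\<bar>c * s\<bar>"] by (simp add: sums_summable divide_inverse mult.commute)
    moreover have "norm (B k) = \<bar>c * s\<bar> ^ k / fact k" for k
      unfolding B_def by (simp add: power_abs)
    ultimately show ?thesis by simp
  qed
  have B: "B sums exp (c * s)" using exp_converges[of "c * s"] unfolding B_def by (simp add: divide_inverse mult.commute)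
  have eq: "(\<Sum>i\<le>m. A i * B (m - i)) = s ^ m / fact m * gp S ?P m x y" for m
  proof -
    have "s ^ m / fact m * gp S ?P m x y = (\<Sum>k\<le>m. s ^ m / fact m * (real (m choose k) * c ^ (m - k) * gp S Q k x y))"
      by (simp add: gp_binom[OF x fin] sum_distrib_left)
    also have "\<dots> = (\<Sum>i\<le>m. A i * B (m - i))"
    proof (rule sum.cong[OF refl])
      fix k assume "k \<in> {..m}"
      then have km: "k \<le> m" by simp
      have sm: "s ^ m = s ^ k * s ^ (m - k)" using km by (simp add: power_add[symmetric])
      show "s ^ m / fact m * (real (m choose k) * c ^ (m - k) * gp S Q k x y) = A k * B (m - k)"
        unfolding A_def B_def binomial_fact[OF km] sm
        by (simp add: field_simps power_mult_distrib)
    qed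
    finally show ?thesis by simp
  qed
  have sums: "(\<lambda>m. s ^ m / fact m * gp S ?P m x y) sums (suminf A * suminf B)"
    using Cauchy_product_sums[OF sA sB] unfolding eq .
  have nn: "\<And>m. s ^ m / fact m * gp S ?P m x y \<ge> 0"
  proof -
    fix m
    have "gp S ?P m x y \<ge> 0"
    proof (rule gp_nonneg[OF x])
      fix a b assume ab: "a \<in> S" "b \<in> S"
      show "?P a b \<ge> 0"
      proof (cases "a = b")
        case True
        have "\<bar>Q a a\<bar> \<le> c" unfolding c_def using ab fin by (intro member_le_sum) auto
        then show ?thesis using True by simp
      next
        case False then show ?thesis using Qoff ab by simp
      qed
    qed
    then show "s ^ m / fact m * gp S ?P m x y \<ge> 0" using s by simp
  qed
  have "suminf A * suminf B = (\<Sum>m. s ^ m / fact m * gp S ?P m x y)"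
    by (rule sums_unique[OF sums])
  also have "\<dots> \<ge> 0" by (rule suminf_nonneg[OF sums_summable[OF sums] nn])
  finally have "suminf A * suminf B \<ge> 0" .
  moreover have "suminf B = exp (c * s)" by (rule sums_unique[OF B, symmetric])
  ultimately have "suminf A \<ge> 0" by (simp add: zero_le_mult_iff)
  then show ?thesis unfolding tp_def A_def .
qed

lemma tp_rowsum:
  assumes fin: "finite S" and x: "x \<in> S" and rows: "\<And>a. a \<in> S \<Longrightarrow> (\<Sum>b\<in>S. Q a b) = 0"
  shows "(\<Sum>y\<in>S. tp S Q s x y) = 1"
proof -
  have "(\<Sum>y\<in>S. tp S Q s x y) = (\<Sum>k. \<Sum>y\<in>S. s ^ k / fact k * gp S Q k x y)"
    unfolding tp_def
    by (rule suminf_sum[symmetric]) (rule summable_norm_cancel[OF gp_summable[OF fin x]])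
  also have "\<dots> = (\<Sum>k. if k = 0 then 1 else 0)"
  proof -
    have "(\<Sum>y\<in>S. s ^ k / fact k * gp S Q k x y) = (if k = 0 then 1 else 0)" for k
      by (subst sum_distrib_left[symmetric]) (simp add: gp_rowsum[OF fin x rows])
    then show ?thesis by simp
  qed
  also have "\<dots> = 1"
  proof -
    have "(\<lambda>k. if k = 0 then 1 else 0::real) sums 1" using sums_single[of 0 "\<lambda>_. 1::real"] by simp
    then show ?thesis by (rule sums_unique[symmetric])
  qed
  finally show ?thesis .
qed

lemma tp_expect_bound:
  assumes fin: "finite S" and x: "x \<in> S" and s: "s \<ge> 0"
    and Qoff: "\<And>a b. a \<in> S \<Longrightarrow> b \<in> S \<Longrightarrow> a \<noteq> b \<Longrightarrow> Q a b \<ge> 0"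
    and rows: "\<And>a. a \<in> S \<Longrightarrow> (\<Sum>b\<in>S. Q a b) = 0"
    and g: "\<And>y. y \<in> S \<Longrightarrow> \<bar>g y\<bar> \<le> M"
  shows "\<bar>\<Sum>y\<in>S. tp S Q s x y * g y\<bar> \<le> M"
proof -
  have "\<bar>\<Sum>y\<in>S. tp S Q s x y * g y\<bar> \<le> (\<Sum>y\<in>S. \<bar>tp S Q s x y * g y\<bar>)" by (rule sum_abs)
  also have "\<dots> \<le> (\<Sum>y\<in>S. tp S Q s x y * M)"
  proof (rule sum_mono)
    fix y assume y: "y \<in> S"
    have t: "tp S Q s x y \<ge> 0" by (rule tp_nonneg[OF fin x s Qoff])
    show "\<bar>tp S Q s x y * g y\<bar> \<le> tp S Q s x y * M"
      unfolding abs_mult using t g[OF y] by (simp add: mult_left_mono)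
  qed
  also have "\<dots> = M" using tp_rowsum[OF fin x rows] by (simp add: sum_distrib_right[symmetric])
  finally show ?thesis .
qed

lemma card_shift_int: "card ({a+v..b+v} - {a..b::int}) \<le> nat \<bar>v\<bar>"
proof -
  have "{a+v..b+v} - {a..b} \<subseteq> {a+v..a-1} \<union> {b+1..b+v}" by auto
  then have "card ({a+v..b+v} - {a..b}) \<le> card ({a+v..a-1} \<union> {b+1..b+v})"
    by (intro card_mono) auto
  also have "\<dots> \<le> card {a+v..a-1} + card {b+1..b+v}" by (rule card_Un_le)
  also have "\<dots> = nat \<bar>v\<bar>" by (simp add: card_atLeastAtMost_int)
  finally show ?thesis .
qed

lemma card_rect_diff:
  fixes a1 b1 a2 b2 v1 v2 :: int
  shows "card (({a1+v1..b1+v1} \<times> {a2+v2..b2+v2}) - ({a1..b1} \<times> {a2..b2}))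
     \<le> nat \<bar>v1\<bar> * nat (b2 - a2 + 1) + nat (b1 - a1 + 1) * nat \<bar>v2\<bar>"
proof -
  let ?X = "{a1..b1}" and ?X' = "{a1+v1..b1+v1}" and ?Y = "{a2..b2}" and ?Y' = "{a2+v2..b2+v2}"
  have "(?X' \<times> ?Y') - (?X \<times> ?Y) \<subseteq> ((?X' - ?X) \<times> ?Y') \<union> (?X' \<times> (?Y' - ?Y))" by auto
  then have "card ((?X' \<times> ?Y') - (?X \<times> ?Y)) \<le> card (((?X' - ?X) \<times> ?Y') \<union> (?X' \<times> (?Y' - ?Y)))"
    by (intro card_mono) auto
  also have "\<dots> \<le> card ((?X' - ?X) \<times> ?Y') + card (?X' \<times> (?Y' - ?Y))" by (rule card_Un_le)
  also have "\<dots> = card (?X' - ?X) * card ?Y' + card ?X' * card (?Y' - ?Y)"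
    by (simp add: card_cartesian_product)
  also have "\<dots> \<le> nat \<bar>v1\<bar> * nat (b2 - a2 + 1) + nat (b1 - a1 + 1) * nat \<bar>v2\<bar>"
    using card_shift_int[of a1 v1 b1] card_shift_int[of a2 v2 b2]
    by (intro add_mono mult_mono) (auto simp: card_atLeastAtMost_int)
  finally show ?thesis .
qed

lemma sum_diff_bound:
  fixes T :: "'a \<Rightarrow> real"
  assumes "finite A" "finite B" "\<And>x. x \<in> A \<union> B \<Longrightarrow> \<bar>T x\<bar> \<le> M"
  shows "\<bar>sum T A - sum T B\<bar> \<le> M * real (card (A - B) + card (B - A))"
proof -
  have "sum T A = sum T (A \<inter> B) + sum T (A - B)" by (rule sum.Int_Diff[OF assms(1)])
  moreover have "sum T B = sum T (B \<inter> A) + sum T (B - A)" by (rule sum.Int_Diff[OF assms(2)])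
  moreover have "A \<inter> B = B \<inter> A" by auto
  ultimately have "sum T A - sum T B = sum T (A - B) - sum T (B - A)" by simp
  also have "\<bar>\<dots>\<bar> \<le> \<bar>sum T (A - B)\<bar> + \<bar>sum T (B - A)\<bar>" by (rule abs_triangle_ineq4)
  also have "\<bar>sum T (A - B)\<bar> \<le> real (card (A - B)) * M"
    by (rule order_trans[OF sum_abs sum_bounded_above]) (use assms(3) in auto)
  also have "\<bar>sum T (B - A)\<bar> \<le> real (card (B - A)) * M"
    by (rule order_trans[OF sum_abs sum_bounded_above]) (use assms(3) in auto)
  finally show ?thesis by (simp add: algebra_simps)
qed

lemma lint_bound:
  fixes h :: "real \<Rightarrow> real"
  assumes ab: "a < b" and hb: "\<And>s. s \<in> {a..<b} \<Longrightarrow> \<bar>h s\<bar> \<le> M"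
  shows "\<bar>LINT s:{a..<b}|lborel. h s\<bar> \<le> M * (b - a)"
proof -
  have M: "M \<ge> 0" using hb[of a] ab by (meson abs_ge_zero atLeastLessThan_iff order_refl order_trans)
  have "\<bar>LINT s:{a..<b}|lborel. h s\<bar> = norm (\<integral>s. indicator {a..<b} s * h s \<partial>lborel)"
    by (simp add: set_lebesgue_integral_def)
  also have "\<dots> \<le> (\<integral>s. norm (indicator {a..<b} s * h s) \<partial>lborel)"
    by (rule integral_norm_bound)
  also have "\<dots> \<le> (\<integral>s. M * indicator {a..<b} s \<partial>lborel)"
  proof (rule integral_mono')
    show "integrable lborel (\<lambda>s. M * indicator {a..<b} s)"
      by (intro integrable_mult_right integrable_real_indicator) (use ab in auto)
    fix s
    show "norm (indicator {a..<b} s * h s) \<le> M * indicator {a..<b} s"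
      using hb[of s] by (auto simp: indicator_def)
    show "0 \<le> M * indicator {a..<b} s" using M by auto
  qed
  also have "\<dots> = M * (b - a)" using ab by simp
  finally show ?thesis .
qed

lemma shift_apply[simp]: "shift u \<eta> (x, i) = \<eta> (sadd x u, i)"
  by (simp add: shift_def)

lemma sadd_simps[simp]: "sadd (a, b) (c, d) = (a + c, b + d)"
  by (simp add: sadd_def)

lemma shift_shift: "shift v (shift u \<eta>) = shift (sadd u v) \<eta>"
  by (rule ext) (auto simp: shift_def sadd_def algebra_simps)

lemma shift_Omega: assumes "\<eta> \<in> Omega" shows "shift u \<eta> \<in> Omega"
proof -
  have H: "\<And>w. exactly_one (\<eta> (w, E1)) (\<eta> (sadd w (1,0), E2)) (\<eta> (sadd w (1,1), E3)) \<and>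
     exactly_one (\<eta> (w, E2)) (\<eta> (sadd w (0,1), E1)) (\<eta> (sadd w (1,1), E3))"
    using assms unfolding Omega_def is_dimer_cov_def by blast
  show ?thesis unfolding Omega_def is_dimer_cov_def
  proof (intro CollectI allI)
    fix w :: site
    have e: "sadd (sadd w (1,0)) u = sadd (sadd w u) (1,0)" "sadd (sadd w (1,1)) u = sadd (sadd w u) (1,1)"
      "sadd (sadd w (0,1)) u = sadd (sadd w u) (0,1)"
      by (auto simp: sadd_def)
    show "exactly_one (shift u \<eta> (w, E1)) (shift u \<eta> (sadd w (1, 0), E2)) (shift u \<eta> (sadd w (1, 1), E3)) \<and>
          exactly_one (shift u \<eta> (w, E2)) (shift u \<eta> (sadd w (0, 1), E1)) (shift u \<eta> (sadd w (1, 1), E3))"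
      unfolding shift_apply e using H[of "sadd w u"] .
  qed
qed

lemma per_nat:
  assumes "periodic L \<eta>"
  shows "\<eta> ((a + int L * int n, b), i) = \<eta> ((a, b), i) \<and> \<eta> ((a, b + int L * int n), i) = \<eta> ((a, b), i)"
proof (induction n)
  case 0 then show ?case by simp
next
  case (Suc n)
  have "\<eta> ((a + int L * int (Suc n), b), i) = \<eta> (sadd (a + int L * int n, b) (int L, 0), i)"
    by (simp add: algebra_simps)
  also have "\<dots> = \<eta> ((a + int L * int n, b), i)" using assms unfolding periodic_def by blast
  finally have 1: "\<eta> ((a + int L * int (Suc n), b), i) = \<eta> ((a, b), i)" using Suc by simp
  have "\<eta> ((a, b + int L * int (Suc n)), i) = \<eta> (sadd (a, b + int L * int n) (0, int L), i)"
    by (simp add: algebra_simps)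
  also have "\<dots> = \<eta> ((a, b + int L * int n), i)" using assms unfolding periodic_def by blast
  finally have 2: "\<eta> ((a, b + int L * int (Suc n)), i) = \<eta> ((a, b), i)" using Suc by simp
  from 1 2 show ?case by blast
qed

lemma per_int:
  assumes "periodic L \<eta>"
  shows "\<eta> ((a + int L * k, b), i) = \<eta> ((a, b), i) \<and> \<eta> ((a, b + int L * k), i) = \<eta> ((a, b), i)"
proof (cases "k \<ge> 0")
  case True
  obtain n where "k = int n" using True by (intro that[of "nat k"]) simp
  then show ?thesis using per_nat[OF assms] by simp
next
  case False
  obtain n where k: "k = - int n" using False by (intro that[of "nat (- k)"]) simp
  have 1: "\<eta> ((a + int L * k, b), i) = \<eta> ((a, b), i)"
    using per_nat[OF assms, of "a + int L * k" n b i] k by simp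
  have 2: "\<eta> ((a, b + int L * k), i) = \<eta> ((a, b), i)"
    using per_nat[OF assms, of a n "b + int L * k" i] k by simp
  from 1 2 show ?thesis by blast
qed

lemma per_tmod:
  assumes "periodic L \<eta>"
  shows "\<eta> (w, i) = \<eta> (tmod L w, i)"
proof -
  obtain a b where w: "w = (a, b)" by (cases w)
  have "\<eta> ((a, b), i) = \<eta> ((a mod int L + int L * (a div int L), b), i)" by simp
  also have "\<dots> = \<eta> ((a mod int L, b), i)" using per_int[OF assms] by blast
  also have "\<dots> = \<eta> ((a mod int L, b mod int L + int L * (b div int L)), i)" by simp
  also have "\<dots> = \<eta> ((a mod int L, b mod int L), i)" using per_int[OF assms] by blast
  finally show ?thesis by (simp add: w tmod_def)
qed

lemma tmod_box: "L \<ge> 1 \<Longrightarrow> tmod L w \<in> box L"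
  by (simp add: tmod_def box_def)

lemma etype_UNIV: "(UNIV :: etype set) = {E1, E2, E3}"
  using etype.exhaust by auto

lemma finite_Omega_L:
  assumes L: "L \<ge> 1"
  shows "finite (Omega_L L \<rho>)"
proof (rule inj_on_finite)
  let ?F = "\<lambda>\<eta>::config. {x \<in> box L \<times> (UNIV :: etype set). \<eta> x}"
  show "inj_on ?F (Omega_L L \<rho>)"
  proof (rule inj_onI)
    fix \<eta> \<eta>' assume e: "\<eta> \<in> Omega_L L \<rho>" "\<eta>' \<in> Omega_L L \<rho>" and eq: "?F \<eta> = ?F \<eta>'"
    have p: "periodic L \<eta>" "periodic L \<eta>'" using e by (auto simp: Omega_L_def)
    show "\<eta> = \<eta>'"
    proof (rule ext)
      fix x :: "site \<times> etype"
      obtain w i where x: "x = (w, i)" by (cases x)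
      have "(tmod L w, i) \<in> ?F \<eta> \<longleftrightarrow> (tmod L w, i) \<in> ?F \<eta>'" using eq by simp
      then have "\<eta> (tmod L w, i) = \<eta>' (tmod L w, i)" using tmod_box[OF L, of w] by auto
      then show "\<eta> x = \<eta>' x" using per_tmod[OF p(1)] per_tmod[OF p(2)] x by metis
    qed
  qed
  show "?F ` Omega_L L \<rho> \<subseteq> Pow (box L \<times> UNIV)" by auto
  show "finite (Pow (box L \<times> (UNIV :: etype set)))" by (simp add: box_def etype_UNIV)
qed

lemma rate_nonneg: "rate L \<rho> \<eta> \<eta>' \<ge> 0"
  unfolding rate_def by (intro sum_nonneg divide_nonneg_nonneg) auto

lemma gen_pow_gp: "gen_pow L \<rho> k = gp (Omega_L L \<rho>) (generator L \<rho>) k"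
  by (induction k) (simp_all add: fun_eq_iff)

lemma expect_eq: "expect L \<rho> \<eta>0 s f = (\<Sum>\<eta>'\<in>Omega_L L \<rho>. tp (Omega_L L \<rho>) (generator L \<rho>) s \<eta>0 \<eta>' * f \<eta>')"
  unfolding expect_def trans_prob_def tp_def gen_pow_gp ..

lemma gen_off: "a \<noteq> b \<Longrightarrow> generator L \<rho> a b \<ge> 0"
  by (simp add: generator_def rate_nonneg)

lemma gen_rows:
  assumes fin: "finite (Omega_L L \<rho>)" and a: "a \<in> Omega_L L \<rho>"
  shows "(\<Sum>b\<in>Omega_L L \<rho>. generator L \<rho> a b) = 0"
proof -
  have "(\<Sum>b\<in>Omega_L L \<rho>. generator L \<rho> a b) = generator L \<rho> a a + (\<Sum>b\<in>Omega_L L \<rho> - {a}. generator L \<rho> a b)"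
    by (rule sum.remove[OF fin a])
  also have "(\<Sum>b\<in>Omega_L L \<rho> - {a}. generator L \<rho> a b) = (\<Sum>b\<in>Omega_L L \<rho> - {a}. rate L \<rho> a b)"
    by (rule sum.cong) (auto simp: generator_def)
  finally show ?thesis by (simp add: generator_def)
qed

lemma expect_bound:
  assumes L: "L \<ge> 1" and e: "\<eta>0 \<in> Omega_L L \<rho>" and s: "s \<ge> 0"
    and fb: "\<And>\<eta>. \<eta> \<in> Omega \<Longrightarrow> \<bar>f \<eta>\<bar> \<le> M"
  shows "\<bar>expect L \<rho> \<eta>0 s (\<lambda>\<eta>. f (shift u \<eta>))\<bar> \<le> M"
  unfolding expect_eq
proof (rule tp_expect_bound[OF finite_Omega_L[OF L] e s])
  show "\<And>a b. a \<in> Omega_L L \<rho> \<Longrightarrow> b \<in> Omega_L L \<rho> \<Longrightarrow> a \<noteq> b \<Longrightarrow> generator L \<rho> a b \<ge> 0"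
    by (rule gen_off)
  show "\<And>a. a \<in> Omega_L L \<rho> \<Longrightarrow> (\<Sum>b\<in>Omega_L L \<rho>. generator L \<rho> a b) = 0"
    by (rule gen_rows[OF finite_Omega_L[OF L]])
  fix y assume "y \<in> Omega_L L \<rho>"
  then have "y \<in> Omega" by (simp add: Omega_L_def)
  then show "\<bar>f (shift u y)\<bar> \<le> M" by (intro fb shift_Omega)
qed

lemma aux_div_bound:
  fixes c X M :: real
  assumes "c > 0" "\<bar>X\<bar> \<le> M * c"
  shows "\<bar>1 / c * X\<bar> \<le> M"
proof -
  have "\<bar>1 / c * X\<bar> = \<bar>X\<bar> / c" using assms(1) by (simp add: abs_mult)
  also have "\<dots> \<le> M" using assms by (simp add: pos_divide_le_eq)
  finally show ?thesis .
qed

lemma T_bound: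
  assumes t: "t > 0" and N: "N \<ge> 1" and i: "i \<ge> 1" and L: "L \<ge> 1" and e: "\<eta>0 \<in> Omega_L L \<rho>"
    and fb: "\<And>\<eta>. \<eta> \<in> Omega \<Longrightarrow> \<bar>f \<eta>\<bar> \<le> M"
  shows "\<bar>1 / (t / real N) * (LINT s:{t * (real i - 1) / real N ..< t * real i / real N}|lborel.
           expect L \<rho> \<eta>0 s (\<lambda>\<eta>. f (shift u \<eta>)))\<bar> \<le> M"
proof -
  have Np: "real N > 0" using N by simp
  have ab: "t * (real i - 1) / real N < t * real i / real N"
    using t Np by (simp add: divide_strict_right_mono)
  have a0: "t * (real i - 1) / real N \<ge> 0" using t Np i by simp
  have "\<bar>LINT s:{t * (real i - 1) / real N ..< t * real i / real N}|lborel. expect L \<rho> \<eta>0 s (\<lambda>\<eta>. f (shift u \<eta>))\<bar>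
      \<le> M * (t * real i / real N - t * (real i - 1) / real N)"
  proof (rule lint_bound[OF ab])
    fix s assume "s \<in> {t * (real i - 1) / real N ..< t * real i / real N}"
    then have "s \<ge> 0" using a0 by simp
    then show "\<bar>expect L \<rho> \<eta>0 s (\<lambda>\<eta>. f (shift u \<eta>))\<bar> \<le> M" by (rule expect_bound[OF L e _ fb])
  qed
  also have "t * real i / real N - t * (real i - 1) / real N = t / real N"
    by (simp add: diff_divide_distrib[symmetric] algebra_simps)
  finally have X: "\<bar>LINT s:{t * (real i - 1) / real N ..< t * real i / real N}|lborel. expect L \<rho> \<eta>0 s (\<lambda>\<eta>. f (shift u \<eta>))\<bar>
      \<le> M * (t / real N)" .
  have tn: "t / real N > 0" using t Np by simp
  show ?thesis by (rule aux_div_bound[OF tn X])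
qed


lemma p_diff:
  assumes t: "t > 0" and N: "N \<ge> 1" and i: "i \<ge> 1" and L: "L \<ge> 1" and e: "\<eta>0 \<in> Omega_L L \<rho>"
    and fb: "\<And>\<eta>. \<eta> \<in> Omega \<Longrightarrow> \<bar>f \<eta>\<bar> \<le> M" and M: "M \<ge> 0"
  shows "\<bar>p_func N L t i j \<rho> \<eta>0 (\<lambda>\<eta>. f (shift v \<eta>)) - p_func N L t i j \<rho> \<eta>0 f\<bar>
     \<le> 2 * M * real (nat \<bar>fst v\<bar> + nat \<bar>snd v\<bar>) * real N / real L"
proof -
  define T where "T u = 1 / (t / real N) * (LINT s:{t * (real i - 1) / real N ..< t * real i / real N}|lborel.
           expect L \<rho> \<eta>0 s (\<lambda>\<eta>. f (shift u \<eta>)))" for u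
  have Tb: "\<bar>T u\<bar> \<le> M" for u unfolding T_def by (rule T_bound[OF t N i L e fb])
  have pf: "p_func N L t i j \<rho> \<eta>0 f = 1 / (real L / real N)^2 * sum T (Bblock N L j)"
    by (simp add: p_func_def T_def)
  have pg: "p_func N L t i j \<rho> \<eta>0 (\<lambda>\<eta>. f (shift v \<eta>)) = 1 / (real L / real N)^2 * (\<Sum>u\<in>Bblock N L j. T (sadd u v))"
    by (simp add: p_func_def T_def shift_shift)
  define n where "n = int (L div N)"
  obtain v1 v2 where v: "v = (v1, v2)" by (cases v)
  define a1 where "a1 = n * (int (fst j) - 1)"
  define a2 where "a2 = n * (int (snd j) - 1)"
  define b1 where "b1 = n * int (fst j) - 1"
  define b2 where "b2 = n * int (snd j) - 1"
  have BB: "Bblock N L j = {a1..b1} \<times> {a2..b2}"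
    by (simp add: Bblock_def a1_def a2_def b1_def b2_def n_def)
  define R' where "R' = {a1+v1..b1+v1} \<times> {a2+v2..b2+v2}"
  have reidx: "(\<Sum>u\<in>Bblock N L j. T (sadd u v)) = sum T R'"
    unfolding BB R'_def
    by (rule sum.reindex_bij_witness[where j = "\<lambda>u. sadd u v" and i = "\<lambda>w. sadd w (- v1, - v2)"])
       (auto simp: v sadd_def)
  have fin: "finite R'" "finite (Bblock N L j)" by (simp_all add: R'_def BB)
  have dif: "\<bar>sum T R' - sum T (Bblock N L j)\<bar> \<le> M * real (card (R' - Bblock N L j) + card (Bblock N L j - R'))"
    by (rule sum_diff_bound[OF fin]) (rule Tb)
  have w1: "b1 - a1 + 1 = n" "b2 - a2 + 1 = n" "1 + b1 - a1 = n" "1 + b2 - a2 = n"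
    by (simp_all add: a1_def a2_def b1_def b2_def algebra_simps)
  have c1: "card (R' - Bblock N L j) \<le> (nat \<bar>v1\<bar> + nat \<bar>v2\<bar>) * (L div N)"
    using card_rect_diff[of a1 v1 b1 a2 v2 b2] unfolding R'_def BB w1 n_def by (simp add: algebra_simps)
  have c2: "card (Bblock N L j - R') \<le> (nat \<bar>v1\<bar> + nat \<bar>v2\<bar>) * (L div N)"
    using card_rect_diff[of "a1+v1" "-v1" "b1+v1" "a2+v2" "-v2" "b2+v2"] unfolding R'_def BB
    by (simp add: w1 n_def algebra_simps)
  define K where "K = real (nat \<bar>fst v\<bar> + nat \<bar>snd v\<bar>)"
  have K0: "K \<ge> 0" by (simp add: K_def)
  have "real (card (R' - Bblock N L j) + card (Bblock N L j - R')) \<le> 2 * K * real (L div N)"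
  proof -
    have "card (R' - Bblock N L j) + card (Bblock N L j - R') \<le> 2 * ((nat \<bar>v1\<bar> + nat \<bar>v2\<bar>) * (L div N))"
      using c1 c2 by simp
    then have "real (card (R' - Bblock N L j) + card (Bblock N L j - R')) \<le> real (2 * ((nat \<bar>v1\<bar> + nat \<bar>v2\<bar>) * (L div N)))"
      by (simp only: of_nat_le_iff)
    then show ?thesis by (simp add: K_def v algebra_simps)
  qed
  also have "\<dots> \<le> 2 * K * (real L / real N)"
    using K0 of_nat_div_le_of_nat[of L N] by (intro mult_left_mono) auto
  finally have cb: "real (card (R' - Bblock N L j) + card (Bblock N L j - R')) \<le> 2 * K * (real L / real N)" .
  have Lp: "real L > 0" and Np: "real N > 0" using L N by auto
  have "\<bar>p_func N L t i j \<rho> \<eta>0 (\<lambda>\<eta>. f (shift v \<eta>)) - p_func N L t i j \<rho> \<eta>0 f\<bar>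
      = \<bar>1 / (real L / real N)^2 * (sum T R' - sum T (Bblock N L j))\<bar>"
    unfolding pf pg reidx by (simp only: right_diff_distrib)
  also have "\<dots> = 1 / (real L / real N)^2 * \<bar>sum T R' - sum T (Bblock N L j)\<bar>"
    by (simp only: abs_mult) simp
  also have "\<dots> \<le> 1 / (real L / real N)^2 * (M * (2 * K * (real L / real N)))"
    using dif cb M by (intro mult_left_mono order_trans[OF dif] mult_left_mono) auto
  also have "\<dots> = 2 * M * K * real N / real L"
    using Lp Np by (simp add: field_simps power2_eq_square)
  finally show ?thesis unfolding K_def .
qed

theorem lemma3:
  fixes \<rho>L :: "nat \<Rightarrow> real \<times> real" and \<rho> :: "real \<times> real"
    and \<eta>0L :: "nat \<Rightarrow> config" and A :: "(real \<times> real) set"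
    and \<psi>0 :: "real \<times> real \<Rightarrow> real"
    and t :: real and N i :: nat and j :: "nat \<times> nat" and \<mu> :: "config measure"
  assumes setting_L: "\<forall>\<^sub>F L in sequentially.
        \<rho>L L \<in> Tri \<and> real L * fst (\<rho>L L) \<in> \<nat> \<and> real L * snd (\<rho>L L) \<in> \<nat> \<and>
        \<eta>0L L \<in> Omega_L L (\<rho>L L)"
    and rho_lim: "\<rho>L \<longlonglongrightarrow> \<rho>" and rho_Tri: "\<rho> \<in> Tri"
    and A: "compact A" "convex A" "A \<subseteq> Tri"
    and psi_C2: "C2 \<psi>0"
    and psi_per: "\<forall>x y. \<psi>0 (x + 1, y) = \<psi>0 (x, y) \<and> \<psi>0 (x, y + 1) = \<psi>0 (x, y)"
    and psi_0: "\<psi>0 (0, 0) = 0"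
    and psi_slope: "\<forall>x. grad \<psi>0 x + \<rho> \<in> A"
    and height_lim: "\<forall>x \<in> {0..1}. \<forall>y \<in> {0..1}. (\<lambda>L. height (\<rho>L L) (\<eta>0L L) (\<lfloor>x * real L\<rfloor>, \<lfloor>y * real L\<rfloor>) / real L)
                              \<longlonglongrightarrow> \<psi>0 (x, y)"
    and t_pos: "t > 0" and N_pos: "N \<ge> 1" and ij: "(i, j) \<in> index_set N"
    and wlp: "weak_limit_point N t i j \<rho>L \<eta>0L \<mu>"
  shows "translation_invariant \<mu>"
  proof -
  have P: "prob_space \<mu>" and sets: "sets \<mu> = sets borel" and O: "emeasure \<mu> Omega = 1"
    using wlp unfolding weak_limit_point_def by blast+
  obtain Ls where sm: "strict_mono Ls" and
    conv: "\<And>f. continuous_on Omega f \<and> bounded (f ` Omega) \<Longrightarrow>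
      (\<lambda>k. p_func N (Ls k) t i j (\<rho>L (Ls k)) (\<eta>0L (Ls k)) f) \<longlonglongrightarrow> (\<integral>x. indicator Omega x * f x \<partial>\<mu>)"
    using wlp unfolding weak_limit_point_def by blast
  have i1: "i \<ge> 1" using ij by (simp add: index_set_def)
  have FL: "filterlim Ls sequentially sequentially" using sm by (rule filterlim_subseq)
  have ev0: "\<forall>\<^sub>F L in sequentially. L \<ge> 1 \<and> \<eta>0L L \<in> Omega_L L (\<rho>L L)"
    using setting_L eventually_ge_at_top[of 1] by eventually_elim auto
  have ev: "\<forall>\<^sub>F k in sequentially. Ls k \<ge> 1 \<and> \<eta>0L (Ls k) \<in> Omega_L (Ls k) (\<rho>L (Ls k))"
    using FL ev0 unfolding filterlim_iff by blast
  have bnd: "bounded (h ` Omega)" if "\<And>x. h x \<in> {0, 1}" for h :: "config \<Rightarrow> real"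
    by (rule bounded_subset[OF finite_imp_bounded[of "{0, 1::real}"]]) (use that in auto)
  show ?thesis
  proof (rule invariance_from_cyl[OF sets P])
    fix J :: "(site \<times> etype) set" and F and v :: site assume J: "finite J"
    define C where "C = cyl id J F"
    define g where "g = (indicator C :: config \<Rightarrow> real)"
    define gv where "gv = (\<lambda>\<eta>. g (shift v \<eta>))"
    have gv_eq: "gv = indicator (shift v -` C)"
      by (auto simp: gv_def g_def fun_eq_iff split: split_indicator)
    have Cs: "C \<in> sets \<mu>" "shift v -` C \<in> sets \<mu>"
      using sets cyl_open[OF J] by (simp_all add: C_def shift_cyl)
    have cg: "continuous_on Omega g" unfolding g_def C_def
      by (rule continuous_on_subset[OF cont_ind_cyl[OF J]]) simp
    have cgv: "continuous_on Omega gv" unfolding gv_eq shift_cyl C_def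
      by (rule continuous_on_subset[OF cont_ind_cyl[OF J]]) simp
    have bg: "bounded (g ` Omega)" by (rule bnd) (simp add: g_def indicator_def)
    have bgv: "bounded (gv ` Omega)" by (rule bnd) (simp add: gv_eq indicator_def)
    have lim1: "(\<lambda>k. p_func N (Ls k) t i j (\<rho>L (Ls k)) (\<eta>0L (Ls k)) g) \<longlonglongrightarrow> measure \<mu> C"
      using conv[OF conjI[OF cg bg]] unfolding g_def integral_Omega_ind[OF sets P O Cs(1)] .
    have lim2: "(\<lambda>k. p_func N (Ls k) t i j (\<rho>L (Ls k)) (\<eta>0L (Ls k)) gv) \<longlonglongrightarrow> measure \<mu> (shift v -` C)"
      using conv[OF conjI[OF cgv bgv]] unfolding gv_eq integral_Omega_ind[OF sets P O Cs(2)] .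
    define c where "c = 2 * 1 * real (nat \<bar>fst v\<bar> + nat \<bar>snd v\<bar>) * real N"
    have gb: "\<bar>g \<eta>\<bar> \<le> 1" for \<eta> by (simp add: g_def indicator_def)
    have lim3: "(\<lambda>k. p_func N (Ls k) t i j (\<rho>L (Ls k)) (\<eta>0L (Ls k)) gv - p_func N (Ls k) t i j (\<rho>L (Ls k)) (\<eta>0L (Ls k)) g) \<longlonglongrightarrow> 0"
    proof (rule Lim_null_comparison)
      show "\<forall>\<^sub>F k in sequentially. norm (p_func N (Ls k) t i j (\<rho>L (Ls k)) (\<eta>0L (Ls k)) gv - p_func N (Ls k) t i j (\<rho>L (Ls k)) (\<eta>0L (Ls k)) g)
          \<le> ((\<lambda>L. c / real L) \<circ> Ls) k"
        using ev
      proof eventually_elim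
        case (elim k)
        then show ?case
          using p_diff[where v = v and j = j, OF t_pos N_pos i1 conjunct1[OF elim] conjunct2[OF elim] gb]
          by (simp add: gv_def c_def)
      qed
      show "((\<lambda>L. c / real L) \<circ> Ls) \<longlonglongrightarrow> 0"
        by (rule LIMSEQ_subseq_LIMSEQ[OF lim_const_over_n sm])
    qed
    have "measure \<mu> (shift v -` C) - measure \<mu> C = 0"
      by (rule LIMSEQ_unique[OF tendsto_diff[OF lim2 lim1] lim3])
    then show "measure \<mu> (shift v -` cyl id J F) = measure \<mu> (cyl id J F)" by (simp add: C_def)
  qed
qed

end
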